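(* Let $A,B\in\mathscr{Q}$ be disjoint option sets and let $K$ be a coherent set of desirable option sets. Then $(A\cup B)-u\in K$ for all $u\in A$ if and only if $B-u\in K$ for all $u\in A$.
   Context: Let $\mathcal{X}$ be a nonempty set and let $\mathscr{V}$ be the real vector space of all functions $u:\mathcal{X}\to\mathbb{R}$ (options), with pointwise operations. For $u,v\in\mathscr{V}$, $u\le v$ iff $u(x)\le v(x)$ for all $x\in\mathcal{X}$, and $u<v$ iff $u\le v$ and $u\neq v$. Let $\mathscr{V}_{>0}=\{u\in\mathscr{V}:0<u\}$ and $\mathscr{V}^s_{>0}=\{\{u\}:u\in\mathscr{V}_{>0}\}$. Let $\mathscr{Q}$ be the set of all finite subsets of $\mathscr{V}$ (including $\emptyset$). For $A\in\mathscr{Q}$ and $u\in\mathscr{V}$, $A-u=\{v-u:v\in A\}$. For a positive integer $n$, $\mathbb{R}^{n,+}=\{\boldsymbol\lambda\in\mathbb{R}^n:\lambda_j\ge0\ \forall j,\ \sum_j\lambda_j>0\}$, and for $\boldsymbol\lambda\in\mathbb{R}^n$, $\mathbf u=(u_1,\dots,u_n)\in\mathscr{V}^n$, $\boldsymbol\lambda\mathbf u=\sum_{j=1}^n\lambda_ju_j$. A set of desirable option sets is any $K\subseteq\mathscr{Q}$. It is coherent if for all $A,B\in K$: (K0) $A\setminus\{0\}\in K$; (K1) $\{0\}\notin K$; (K2) $\mathscr{V}^s_{>0}\subseteq K$; (K3) $\{\boldsymbol\lambda(\mathbf u)\mathbf u:\mathbf u\in A\times B\}\in K$ for every map $\boldsymbol\lambda:A\times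 B\to\mathbb{R}^{2,+}$; (K4) $A\cup Q\in K$ for all $Q\in\mathscr{Q}$. *)

theory Defs
  imports Complex_Main
begin

type_synonym 'x opt = "'x \<Rightarrow> real"

definition opt_le :: "'x opt \<Rightarrow> 'x opt \<Rightarrow> bool" where
  "opt_le u v \<longleftrightarrow> (\<forall>x. u x \<le> v x)"

definition opt_lt :: "'x opt \<Rightarrow> 'x opt \<Rightarrow> bool" where
  "opt_lt u v \<longleftrightarrow> opt_le u v \<and> u \<noteq> v"

definition opt_zero :: "'x opt" where
  "opt_zero = (\<lambda>x. 0)"

definition Vpos :: "'x opt set" where
  "Vpos = {u. opt_lt opt_zero u}"

definition Vpos_s :: "'x opt set set" where
  "Vpos_s = {{u} | u. u \<in> Vpos}"

definition shift :: "'x opt set \<Rightarrow> 'x opt \<Rightarrow> 'x opt set" where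
  "shift A u = (\<lambda>v. (\<lambda>x. v x - u x)) ` A"

definition posR2 :: "real \<times> real \<Rightarrow> bool" where
  "posR2 l \<longleftrightarrow> fst l \<ge> 0 \<and> snd l \<ge> 0 \<and> fst l + snd l > 0"

definition comb_set ::
  "'x opt set \<Rightarrow> 'x opt set \<Rightarrow> ('x opt \<times> 'x opt \<Rightarrow> real \<times> real) \<Rightarrow> 'x opt set" where
  "comb_set A B lam =
     (\<lambda>(u, v). (\<lambda>x. fst (lam (u, v)) * u x + snd (lam (u, v)) * v x)) ` (A \<times> B)"

definition coherent :: "'x opt set set \<Rightarrow> bool" where
  "coherent K \<longleftrightarrow>
     (\<forall>A\<in>K. finite A) \<and>
     (\<forall>A\<in>K. A - {opt_zero} \<in> K) \<and>
     {opt_zero} \<notin> K \<and>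
     Vpos_s \<subseteq> K \<and>
     (\<forall>A\<in>K. \<forall>B\<in>K. \<forall>lam. (\<forall>w\<in>A \<times> B. posR2 (lam w)) \<longrightarrow> comb_set A B lam \<in> K) \<and>
     (\<forall>A\<in>K. \<forall>Q. finite Q \<longrightarrow> A \<union> Q \<in> K)"

end

theory Submission
  imports Defs
begin

lemma K_sup:
  assumes "coherent K" "X \<in> K" "X - {opt_zero} \<subseteq> Y" "finite Y"
  shows "Y \<in> K"
proof -
  have "X - {opt_zero} \<in> K" using assms(1,2) unfolding coherent_def by blast
  hence "(X - {opt_zero}) \<union> Y \<in> K" using assms(1,4) unfolding coherent_def by blast
  moreover have "(X - {opt_zero}) \<union> Y = Y" using assms(3) by blast
  ultimately show ?thesis by simp
qed

lemma step:
  fixes K :: "'x opt set set"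
  assumes coh: "coherent K" and fC: "finite C" and fB: "finite B"
    and Su: "shift ((C - {u}) \<union> B) u \<in> K"
    and Sa: "shift ((C - {a}) \<union> B) a \<in> K"
  shows "shift ((C - {a} - {u}) \<union> B) u \<in> K"
proof -
  define lam :: "'x opt \<times> 'x opt \<Rightarrow> real \<times> real" where
    "lam = (\<lambda>(p,q). if p = (\<lambda>t. a t - u t) then (1,1) else (1,0))"
  let ?S1 = "shift ((C - {u}) \<union> B) u"
  let ?S2 = "shift ((C - {a}) \<union> B) a"
  have pos: "\<forall>w\<in>?S1 \<times> ?S2. posR2 (lam w)"
    unfolding lam_def posR2_def by (simp add: case_prod_beta)
  have R: "comb_set ?S1 ?S2 lam \<in> K"
    using coh Su Sa pos unfolding coherent_def by blast
  have sub: "comb_set ?S1 ?S2 lam - {opt_zero} \<subseteq> shift ((C - {a} - {u}) \<union> B) u"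
  proof
    fix z assume z: "z \<in> comb_set ?S1 ?S2 lam - {opt_zero}"
    hence "z \<in> comb_set ?S1 ?S2 lam" by blast
    then obtain w where w: "w \<in> ?S1 \<times> ?S2"
      and zw: "z = (\<lambda>(u, v). (\<lambda>x. fst (lam (u, v)) * u x + snd (lam (u, v)) * v x)) w"
      unfolding comb_set_def by (rule imageE)
    obtain p q where wpq: "w = (p,q)" by (cases w)
    have pq: "(p,q) \<in> ?S1 \<times> ?S2" using w wpq by simp
    have zdef0: "z = (\<lambda>x. fst (lam (p, q)) * p x + snd (lam (p, q)) * q x)"
      using zw wpq by simp
    from pq obtain x where x: "x \<in> (C - {u}) \<union> B" and px: "p = (\<lambda>t. x t - u t)"
      unfolding shift_def by blast
    from pq obtain y where y: "y \<in> (C - {a}) \<union> B" and qy: "q = (\<lambda>t. y t - a t)"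
      unfolding shift_def by blast
    have zdef: "z = (\<lambda>t. fst (lam ((\<lambda>t. x t - u t), (\<lambda>t. y t - a t))) * (x t - u t)
                     + snd (lam ((\<lambda>t. x t - u t), (\<lambda>t. y t - a t))) * (y t - a t))"
      using zdef0 px qy by simp
    have znz: "z \<noteq> opt_zero" using z by blast
    show "z \<in> shift ((C - {a} - {u}) \<union> B) u"
    proof (cases "(\<lambda>t. x t - u t) = (\<lambda>t. a t - u t)")
      case True
      hence "\<And>t. x t - u t = a t - u t" by meson
      hence xa: "x = a" by (simp add: fun_eq_iff)
      have zz: "z = (\<lambda>t. y t - u t)" using xa unfolding zdef lam_def by simp
      have "y \<noteq> u"
      proof
        assume "y = u" hence "z = opt_zero" using zz unfolding opt_zero_def by simp
        thus False using znz by simp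
      qed
      hence "y \<in> (C - {a} - {u}) \<union> B" using y by blast
      thus ?thesis using zz unfolding shift_def by blast
    next
      case False
      hence zz: "z = (\<lambda>t. x t - u t)" unfolding zdef lam_def by simp
      have "x \<noteq> a" using False by blast
      hence "x \<in> (C - {a} - {u}) \<union> B" using x by blast
      thus ?thesis using zz unfolding shift_def by blast
    qed
  qed
  have "finite (shift ((C - {a} - {u}) \<union> B) u)" using fC fB unfolding shift_def by simp
  thus ?thesis using K_sup[OF coh R sub] by simp
qed

theorem mainTheorem15:
  fixes K :: "'x opt set set" and A B :: "'x opt set"
  assumes "coherent K" and "finite A" and "finite B" and "A \<inter> B = {}"
  shows "(\<forall>u\<in>A. shift (A \<union> B) u \<in> K) \<longleftrightarrow> (\<forall>u\<in>A. shift B u \<in> K)"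
proof
  assume H: "\<forall>u\<in>A. shift (A \<union> B) u \<in> K"
  have "D \<subseteq> A \<Longrightarrow> \<forall>u\<in>A. shift ((A - D - {u}) \<union> B) u \<in> K" if fD: "finite D" for D
    using fD
  proof (induction D rule: finite_induct)
    case empty
    show ?case
    proof
      fix u assume u: "u \<in> A"
      have "shift (A \<union> B) u - {opt_zero} \<subseteq> shift ((A - {} - {u}) \<union> B) u"
        unfolding shift_def opt_zero_def by auto
      moreover have "finite (shift ((A - {} - {u}) \<union> B) u)" using assms(2,3) unfolding shift_def by simp
      ultimately show "shift ((A - {} - {u}) \<union> B) u \<in> K"
        using K_sup[OF assms(1)] H u by blast
    qed
  next
    case (insert a D)
    hence IH: "\<forall>u\<in>A. shift ((A - D - {u}) \<union> B) u \<in> K" and aA: "a \<in> A" by auto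
    show ?case
    proof
      fix u assume u: "u \<in> A"
      have "shift ((A - D - {a} - {u}) \<union> B) u \<in> K"
        using step[OF assms(1) _ assms(3), of "A - D" u a] IH u aA assms(2) by blast
      moreover have "A - D - {a} - {u} = A - insert a D - {u}" by blast
      ultimately show "shift ((A - insert a D - {u}) \<union> B) u \<in> K" by simp
    qed
  qed
  from this[of A] assms(2) show "\<forall>u\<in>A. shift B u \<in> K" by simp
next
  assume H: "\<forall>u\<in>A. shift B u \<in> K"
  show "\<forall>u\<in>A. shift (A \<union> B) u \<in> K"
  proof
    fix u assume u: "u \<in> A"
    have fA: "finite (shift A u)" using assms(2) unfolding shift_def by simp
    have K4: "\<forall>A\<in>K. \<forall>Q. finite Q \<longrightarrow> A \<union> Q \<in> K" using assms(1) unfolding coherent_def by (elim conjE)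
    have "shift B u \<in> K" using H u by blast
    hence "shift B u \<union> shift A u \<in> K" using K4 fA by blast
    moreover have "shift B u \<union> shift A u = shift (A \<union> B) u" unfolding shift_def by blast
    ultimately show "shift (A \<union> B) u \<in> K" by simp
  qed
qed

end
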